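(* Let $\rho>-1$, and for $t\in\mathbb R$ let $\tilde a_n=\tilde a_n(t)>0$ ($n\ge1$, $\tilde a_0=0$) be the recurrence coefficients in $\tilde a_{n+1}\tilde p_{n+1}(u)=u\tilde p_n(u)-\tilde a_n\tilde p_{n-1}(u)$ of the orthonormal polynomials for the weight $|u|^{2\rho+1}\exp(-u^4/4-tu^2)$ on $\mathbb R$. Then for every $n\ge1$, $v=\tilde a_n^2$ satisfies the Painlevé IV equation $$\ddot v=\frac{\dot v^2}{2v}+\frac{3v^3}{2}+4tv^2+2(t^2-\alpha)v+\frac{\beta}{v}$$ with $$\alpha=-\frac n2-(2\rho+1)\frac{1+3(-1)^n}{4},\qquad \beta=-\frac{\big(n+(2\rho+1)\,\mathrm{odd}(n)\big)^2}{2},$$ where $\mathrm{odd}(n)=(1-(-1)^n)/2$.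
   Context: Dots denote $d/dt$. *)

theory Defs
  imports "HOL-Analysis.Analysis" "HOL-Computational_Algebra.Polynomial"
begin

definition pIV_weight :: "real \<Rightarrow> real \<Rightarrow> real \<Rightarrow> real" where
  "pIV_weight \<rho> t u = \<bar>u\<bar> powr (2 * \<rho> + 1) * exp (- (u ^ 4) / 4 - t * u ^ 2)"

definition orthonormal_polys :: "(real \<Rightarrow> real) \<Rightarrow> (nat \<Rightarrow> real poly) \<Rightarrow> bool" where
  "orthonormal_polys w p \<longleftrightarrow>
     (\<forall>n. degree (p n) = n \<and> lead_coeff (p n) > 0) \<and>
     (\<forall>m n. integrable lborel (\<lambda>u. poly (p m) u * poly (p n) u * w u) \<and>
            (LINT u|lborel. poly (p m) u * poly (p n) u * w u) = (if m = n then 1 else 0))"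

end

theory Submission
  imports Defs
begin


lemma poly_X_mult: "[:0,1:] * (p :: real poly) = pCons 0 p"
  by simp

locale OP =
  fixes w :: "real \<Rightarrow> real" and P :: "nat \<Rightarrow> real poly" and A :: "nat \<Rightarrow> real"
  assumes orth: "orthonormal_polys w P"
    and A0: "A 0 = 0"
    and Apos: "\<And>k. k \<ge> 1 \<Longrightarrow> A k > 0"
    and rec: "\<And>k u. A (k + 1) * poly (P (k + 1)) u = u * poly (P k) u - A k * poly (P (k - 1)) u"
begin

lemma degP: "degree (P n) = n" and leadP: "lead_coeff (P n) > 0"
  using orth unfolding orthonormal_polys_def by blast+

lemma Pne: "P n \<noteq> 0"
  using leadP[of n] by auto

lemma leadne: "lead_coeff (P n) \<noteq> 0"
  using leadP[of n] by linarith

lemma intPP: "integrable lborel (\<lambda>u. poly (P m) u * poly (P n) u * w u)"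
  and ipPP: "(LINT u|lborel. poly (P m) u * poly (P n) u * w u) = (if m = n then 1 else 0)"
  using orth unfolding orthonormal_polys_def by auto

lemma P0: "P 0 = [:lead_coeff (P 0):]"
  using degP[of 0] by (metis degree_0_id)

lemma span:
  assumes "degree q \<le> m"
  shows "\<exists>c. q = (\<Sum>i\<le>m. smult (c i) (P i))"
  using assms
proof (induction m arbitrary: q)
  case 0
  then have q: "q = [:coeff q 0:]" by (metis degree_0_id le_zero_eq)
  have ne: "lead_coeff (P 0) \<noteq> 0" by (rule leadne)
  show ?case
  proof -
    obtain l0 where l0: "P 0 = [:l0:]" "l0 = lead_coeff (P 0)" using P0 by blast
    have l0ne: "l0 \<noteq> 0" using ne l0(2) by simp
    have "q = smult (coeff q 0 / l0) (P 0)"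
      using l0ne by (subst q) (simp add: l0(1))
    then show ?thesis by (intro exI[of _ "\<lambda>i. coeff q 0 / l0"]) simp
  qed
next
  case (Suc m)
  define k where "k = coeff q (Suc m) / lead_coeff (P (Suc m))"
  define r where "r = q - smult k (P (Suc m))"
  have ne: "lead_coeff (P (Suc m)) \<noteq> 0" by (rule leadne)
  have "degree r \<le> m"
  proof (rule degree_le, intro allI impI)
    fix i assume i: "m < i"
    show "coeff r i = 0"
    proof (cases "i = Suc m")
      case True
      then show ?thesis using ne degP[of "Suc m"] by (simp add: r_def k_def)
    next
      case False
      then have "i > Suc m" using i by simp
      then show ?thesis using Suc.prems degP[of "Suc m"]
        by (simp add: r_def coeff_eq_0)
    qed
  qed
  then obtain c where c: "r = (\<Sum>i\<le>m. smult (c i) (P i))" using Suc.IH by blast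
  define c' where "c' = c(Suc m := k)"
  have "(\<Sum>i\<le>Suc m. smult (c' i) (P i)) = (\<Sum>i\<le>m. smult (c' i) (P i)) + smult k (P (Suc m))"
    by (simp add: c'_def)
  also have "(\<Sum>i\<le>m. smult (c' i) (P i)) = (\<Sum>i\<le>m. smult (c i) (P i))"
    by (rule sum.cong) (auto simp: c'_def)
  finally have s: "(\<Sum>i\<le>Suc m. smult (c' i) (P i)) = (\<Sum>i\<le>m. smult (c i) (P i)) + smult k (P (Suc m))" .
  have "q = r + smult k (P (Suc m))" unfolding r_def by simp
  then have "q = (\<Sum>i\<le>Suc m. smult (c' i) (P i))" using c s by simp
  then show ?case by blast
qed

lemma int_poly: "integrable lborel (\<lambda>u. poly q u * w u)"
proof -
  have ne: "lead_coeff (P 0) \<noteq> 0" by (rule leadne)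
  have i1: "integrable lborel (\<lambda>u. poly (P i) u * w u)" for i
  proof -
    have "integrable lborel (\<lambda>u. (poly (P i) u * poly (P 0) u * w u) / lead_coeff (P 0))"
      using intPP[of i 0] by simp
    moreover have "(\<lambda>u. (poly (P i) u * poly (P 0) u * w u) / lead_coeff (P 0)) = (\<lambda>u. poly (P i) u * w u)"
      using ne by (subst P0) simp
    ultimately show ?thesis by simp
  qed
  obtain c where c: "q = (\<Sum>i\<le>degree q. smult (c i) (P i))" using span[of q "degree q"] by auto
  have "integrable lborel (\<lambda>u. \<Sum>i\<le>degree q. c i * (poly (P i) u * w u))"
    by (rule Bochner_Integration.integrable_sum) (simp add: i1)
  moreover have "(\<lambda>u. \<Sum>i\<le>degree q. c i * (poly (P i) u * w u)) = (\<lambda>u. poly q u * w u)"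
    by (subst (2) c) (simp add: poly_sum sum_distrib_right mult.assoc)
  ultimately show ?thesis by simp
qed

definition L :: "real poly \<Rightarrow> real" where
  "L q = (LINT u|lborel. poly q u * w u)"

lemma L_add[simp]: "L (p + q) = L p + L q"
  unfolding L_def using int_poly[of p] int_poly[of q]
  by (simp add: distrib_right)

lemma L_smult[simp]: "L (smult c p) = c * L p"
  unfolding L_def by (simp add: mult.assoc)

lemma L_uminus[simp]: "L (- p) = - L p"
  unfolding L_def by simp

lemma L_diff[simp]: "L (p - q) = L p - L q"
  using L_add[of p "-q"] by simp

lemma L_zero[simp]: "L 0 = 0"
  unfolding L_def by simp

lemma L_sum: "L (\<Sum>i\<in>S. f i) = (\<Sum>i\<in>S. L (f i))"
  by (induction S rule: infinite_finite_induct) auto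

lemma LPP: "L (P m * P n) = (if m = n then 1 else 0)"
  unfolding L_def using ipPP[of m n] by (simp add: mult.assoc)

lemma L_orth:
  assumes "degree q \<le> m"
  shows "L (q * P m) = coeff q m / lead_coeff (P m)"
proof -
  obtain c where c: "q = (\<Sum>i\<le>m. smult (c i) (P i))" using span[OF assms] by auto
  have "L (q * P m) = (\<Sum>i\<le>m. c i * L (P i * P m))"
    by (subst c) (simp add: sum_distrib_right L_sum)
  also have "\<dots> = (\<Sum>i\<le>m. if i = m then c i else 0)"
    by (intro sum.cong) (auto simp: LPP)
  also have "\<dots> = c m" by simp
  finally have 1: "L (q * P m) = c m" .
  have "coeff q m = (\<Sum>i\<le>m. c i * coeff (P i) m)"
    by (subst c) (simp add: coeff_sum)
  also have "\<dots> = c m * coeff (P m) m"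
  proof (rule sum.mono_neutral_right[THEN trans])
    show "finite {..m}" by simp
    show "{m} \<subseteq> {..m}" by simp
    show "\<forall>i\<in>{..m} - {m}. c i * coeff (P i) m = 0"
      using degP by (auto intro!: coeff_eq_0)
  qed simp
  finally show ?thesis using 1 leadP[of m] degP[of m] by simp
qed

lemma xrec: "[:0,1:] * P k = smult (A (k + 1)) (P (k + 1)) + smult (A k) (P (k - 1))"
proof -
  have "poly ([:0,1:] * P k) = poly (smult (A (k + 1)) (P (k + 1)) + smult (A k) (P (k - 1)))"
    using rec by (auto simp: fun_eq_iff algebra_simps)
  then show ?thesis by (simp add: poly_eq_poly_eq_iff)
qed

lemma A_lead: "k \<ge> 1 \<Longrightarrow> A k = lead_coeff (P (k - 1)) / lead_coeff (P k)"
proof -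
  assume k: "k \<ge> 1"
  then obtain j where j: "k = j + 1" by (metis add.commute le_Suc_ex)
  have "coeff ([:0,1:] * P j) (j + 1) = coeff (smult (A (j + 1)) (P (j + 1)) + smult (A j) (P (j - 1))) (j + 1)"
    by (subst xrec) simp
  then have "lead_coeff (P j) = A (j + 1) * lead_coeff (P (j + 1))"
    using degP[of j] degP[of "j+1"] degP[of "j-1"] by (simp add: poly_X_mult coeff_eq_0)
  then show ?thesis using j leadne[of k] by (simp add: field_simps)
qed

lemma P_odd0: "odd k \<Longrightarrow> poly (P k) 0 = 0"
proof -
  have "poly (P (2 * j + 1)) 0 = 0" for j
  proof (induction j)
    case 0
    have "A 1 * poly (P 1) 0 = 0" using rec[of 0 0] A0 by simp
    then show ?case using Apos[of 1] by simp
  next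
    case (Suc j)
    have "A (2 * j + 3) * poly (P (2 * j + 3)) 0 = - A (2 * j + 2) * poly (P (2 * j + 1)) 0"
      using rec[of "2 * j + 2" 0] by (simp add: numeral_3_eq_3)
    then show ?case using Suc Apos[of "2 * j + 3"] by (simp add: numeral_3_eq_3)
  qed
  then show "odd k \<Longrightarrow> poly (P k) 0 = 0" by (metis oddE)
qed

end


locale OPF = OP +
  fixes c t :: real
  assumes ibp: "\<And>R. L (smult c R + [:0,1:] * pderiv R - [:0,1:] * [:0, 2*t, 0, 1:] * R) = 0"
begin

lemma L_numeral[simp]: "L (numeral k * p) = numeral k * L p"
  unfolding L_def by (simp add: mult.assoc)

lemma L_numeral2[simp]: "L (p * (numeral k * q)) = numeral k * L (p * q)"
  unfolding L_def by (simp add: mult.assoc mult.left_commute)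

lemma LW:
  assumes n: "n \<ge> 1"
  shows "L ([:0, 2*t, 0, 1:] * P n * P (n - 1)) = A n * (A (n+1)^2 + A n^2 + A (n-1)^2) + 2*t*A n"
proof -
  define X :: "real poly" where "X = [:0,1:]"
  have W: "[:0, 2*t, 0, 1:] = X*X*X + smult (2*t) X"
    by (simp add: X_def)
  have e: "[:0, 2*t, 0, 1:] * P (k+1) * P k = (X * (X * P (k+1))) * (X * P k) + smult (2*t) ((X * P (k+1)) * P k)" for k
    by (simp add: W X_def algebra_simps)
  have r: "X * P k = smult (A (k + 1)) (P (k + 1)) + smult (A k) (P (k - 1))" for k
    unfolding X_def by (rule xrec)
  show ?thesis
  proof (cases "n = 1")
    case True
    have r1: "X * P 1 = smult (A 2) (P 2) + smult (A 1) (P 0)" using r[of 1] by (simp add: numeral_2_eq_2)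
    have r0: "X * P 0 = smult (A 1) (P 1)" using r[of 0] by (simp add: A0)
    have r22: "X * P 2 = smult (A 3) (P 3) + smult (A 2) (P 1)" using r[of 2] by (simp add: eval_nat_numeral)
    have rr: "X * (X * P 1) = smult (A 2) (X * P 2) + smult (A 1) (X * P 0)"
      unfolding r1 by (simp add: algebra_simps)
    have "L ([:0, 2*t, 0, 1:] * P n * P (n - 1)) = 
       L ((smult (A 2) (smult (A 3) (P 3) + smult (A 2) (P 1)) + smult (A 1) (smult (A 1) (P 1))) * (smult (A 1) (P 1)) + smult (2*t) ((smult (A 2) (P 2) + smult (A 1) (P 0)) * P 0))"
      using e[of 0] unfolding True by (simp only: One_nat_def[symmetric] diff_self_eq_0 add_0) (simp only: rr, simp only: r1 r0 r22)
    also have "\<dots> = A 1 * (A 2 ^2 + A 1 ^2) + 2*t*A 1"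
      by (simp add: algebra_simps LPP power2_eq_square)
    also have "A 1 * (A 2 ^2 + A 1 ^2) + 2*t*A 1 = A (0+1) * (A (0+2)^2 + A (0+1)^2 + A 0^2) + 2*t*A (0+1)"
      by (simp only: add_0 A0) simp
    also have "\<dots> = A n * (A (n+1)^2 + A n^2 + A (n-1)^2) + 2*t*A n"
      unfolding True by simp
    finally show ?thesis .
  next
    case False
    have "\<exists>j. n = j + 2" using n False by presburger
    then obtain j where nj: "n = j + 2" by blast
    have r2: "X * P (j+2) = smult (A (j+3)) (P (j+3)) + smult (A (j+2)) (P (j+1))"
      using r[of "j+2"] by (simp add: numeral_3_eq_3)
    have r3: "X * P (j+3) = smult (A (j+4)) (P (j+4)) + smult (A (j+3)) (P (j+2))"
      using r[of "j+3"] by (simp add: eval_nat_numeral)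
    have r1: "X * P (j+1) = smult (A (j+2)) (P (j+2)) + smult (A (j+1)) (P j)"
      using r[of "j+1"] by (simp add: eval_nat_numeral)
    have rr: "X * (X * P (j+2)) = smult (A (j+3)) (X * P (j+3)) + smult (A (j+2)) (X * P (j+1))"
      unfolding r2 by (simp add: algebra_simps)
    have "L ([:0, 2*t, 0, 1:] * P n * P (n - 1)) = 
       L ((smult (A (j+3)) (smult (A (j+4)) (P (j+4)) + smult (A (j+3)) (P (j+2)))
           + smult (A (j+2)) (smult (A (j+2)) (P (j+2)) + smult (A (j+1)) (P j)))
          * (smult (A (j+2)) (P (j+2)) + smult (A (j+1)) (P j))
        + smult (2*t) ((smult (A (j+3)) (P (j+3)) + smult (A (j+2)) (P (j+1))) * P (j+1)))"
    proof -
      have h: "n - 1 = j + 1" using nj by auto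
      have e2: "[:0, 2*t, 0, 1:] * P (j+2) * P (j+1) = (X * (X * P (j+2))) * (X * P (j+1)) + smult (2*t) ((X * P (j+2)) * P (j+1))"
        by (simp add: W X_def algebra_simps)
      show ?thesis unfolding h unfolding nj unfolding e2 unfolding rr unfolding r1 r2 r3 ..
    qed
    also have "\<dots> = A (j+2) * (A (j+3) ^2 + A (j+2) ^2 + A (j+1) ^2) + 2*t*A (j+2)"
      by (simp add: algebra_simps LPP power2_eq_square)
    also have "\<dots> = A n * (A (n+1)^2 + A n^2 + A (n-1)^2) + 2*t*A n"
    proof -
      have h: "n - 1 = j + 1" "n + 1 = j + 3" using nj by auto
      show ?thesis unfolding h unfolding nj ..
    qed
    finally show ?thesis .
  qed
qed


lemma L_low: "degree q < m \<Longrightarrow> L (q * P m) = 0"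
  using L_orth[of q m] by (simp add: coeff_eq_0)

lemma L_comm: "L (p * q) = L (q * p)"
  by (simp add: mult.commute)

definition \<theta> :: "nat \<Rightarrow> real" where
  "\<theta> n = real n + (c - 1) * (if odd n then 1 else 0)"

lemma LW_ibp:
  assumes n: "n \<ge> 1"
  shows "L ([:0, 2*t, 0, 1:] * P n * P (n - 1)) = \<theta> n / A n"
proof -
  define X :: "real poly" where "X = [:0,1:]"
  define W :: "real poly" where "W = [:0, 2*t, 0, 1:]"
  have ib: "L (smult c R + X * pderiv R - X * W * R) = 0" for R
    using ibp[of R] unfolding X_def W_def .
  have Xc: "coeff (X * q) (Suc k) = coeff q k" for q k by (simp add: X_def)
  have Xc0: "coeff (X * q) 0 = 0" for q by (simp add: X_def)
  have Xd: "degree (X * q) \<le> Suc (degree q)" for q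
    unfolding X_def using degree_pCons_le[of 0 q] by simp
  have Xd2: "q \<noteq> 0 \<Longrightarrow> degree (X * q) = Suc (degree q)" for q
    unfolding X_def by simp
  have An: "A n = lead_coeff (P (n - 1)) / lead_coeff (P n)" using A_lead[OF n] .
  have Anpos: "A n > 0" using Apos[OF n] .
  show ?thesis
  proof (cases "odd n")
    case False
    then have "odd (n - 1)" using n by simp
    then have "poly (P (n - 1)) 0 = 0" by (rule P_odd0)
    then have "[:-0, 1:] dvd P (n - 1)" using poly_eq_0_iff_dvd by blast
    then obtain s where s: "P (n - 1) = X * s" unfolding X_def by (auto elim: dvdE)
    have sne: "s \<noteq> 0" using s Pne[of "n-1"] by auto
    have ds: "Suc (degree s) = n - 1" using Xd2[OF sne] s degP[of "n-1"] by simp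
    have n2: "n \<ge> 2" using n False by presburger
    have e1: "L (smult c (P n * s)) = 0"
      using L_low[of s n] ds by (simp add: mult.commute)
    have "X * pderiv (P n * s) = (X * pderiv s) * P n + pderiv (P n) * P (n - 1)"
      unfolding s by (simp add: pderiv_mult algebra_simps)
    then have e2: "L (X * pderiv (P n * s)) = L ((X * pderiv s) * P n) + L (pderiv (P n) * P (n - 1))"
      by simp
    have "degree (X * pderiv s) < n"
      using Xd[of "pderiv s"] ds degree_pderiv[of s] by simp
    then have e3: "L ((X * pderiv s) * P n) = 0" by (rule L_low)
    have dpn: "degree (pderiv (P n)) \<le> n - 1" using degree_pderiv[of "P n"] degP[of n] by simp
    have "L (pderiv (P n) * P (n - 1)) = coeff (pderiv (P n)) (n - 1) / lead_coeff (P (n - 1))"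
      using L_orth[OF dpn] .
    also have "coeff (pderiv (P n)) (n - 1) = real n * lead_coeff (P n)"
      using n by (simp add: coeff_pderiv degP)
    finally have e4: "L (pderiv (P n) * P (n - 1)) = real n / A n"
      using leadne[of n] leadne[of "n-1"] by (simp add: An field_simps)
    have xw: "X * W * (P n * s) = W * P n * P (n - 1)"
      unfolding s by (simp add: algebra_simps)
    have "L (smult c (P n * s) + X * pderiv (P n * s) - X * W * (P n * s)) = 
       L (smult c (P n * s)) + L (X * pderiv (P n * s)) - L (X * W * (P n * s))"
      by (simp only: L_add L_diff)
    also have "\<dots> = real n / A n - L (W * P n * P (n - 1))"
      unfolding e1 e2 e3 e4 xw by simp
    finally have "L (smult c (P n * s) + X * pderiv (P n * s) - X * W * (P n * s)) = 
       real n / A n - L (W * P n * P (n - 1))" .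
    then have "L (W * P n * P (n - 1)) = real n / A n" using ib[of "P n * s"] by simp
    then show ?thesis using False by (simp add: \<theta>_def W_def)
  next
    case True
    then have "poly (P n) 0 = 0" by (rule P_odd0)
    then have "[:-0, 1:] dvd P n" using poly_eq_0_iff_dvd by blast
    then obtain s where s: "P n = X * s" unfolding X_def by (auto elim: dvdE)
    have sne: "s \<noteq> 0" using s Pne[of n] by auto
    have ds: "Suc (degree s) = n" using Xd2[OF sne] s degP[of n] by simp
    have sn: "Suc (n - 1) = n" using n by simp
    have "coeff s (n - 1) = coeff (X * s) n" using Xc[of s "n-1"] unfolding sn by simp
    then have cs: "coeff s (n - 1) = lead_coeff (P n)" using s degP[of n] by simp
    have e1: "L (smult c (s * P (n - 1))) = c / A n"
    proof -
      have "L (s * P (n - 1)) = coeff s (n - 1) / lead_coeff (P (n - 1))"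
        using L_orth[of s "n - 1"] ds by simp
      then have "L (s * P (n - 1)) = lead_coeff (P n) / lead_coeff (P (n - 1))" using cs by simp
      moreover have "1 / A n = lead_coeff (P n) / lead_coeff (P (n - 1))" unfolding An by simp
      ultimately have "L (s * P (n - 1)) = 1 / A n" by simp
      then show ?thesis by simp
    qed
    have "X * pderiv (s * P (n - 1)) = (X * pderiv s) * P (n - 1) + pderiv (P (n - 1)) * P n"
      by (simp add: s pderiv_mult algebra_simps)
    then have e2: "L (X * pderiv (s * P (n - 1))) = L ((X * pderiv s) * P (n - 1)) + L (pderiv (P (n - 1)) * P n)"
      by simp
    have "degree (pderiv (P (n - 1))) < n"
      using degree_pderiv[of "P (n - 1)"] degP[of "n - 1"] n by simp
    then have e3: "L (pderiv (P (n - 1)) * P n) = 0" by (rule L_low)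
    have e4: "L ((X * pderiv s) * P (n - 1)) = (real n - 1) / A n"
    proof (cases "n = 1")
      case True
      then have "degree s = 0" using ds by simp
      then have "pderiv s = 0" using pderiv_eq_0_iff by blast
      then show ?thesis using True by simp
    next
      case False
      then have n2: "n \<ge> 2" using n by simp
      have dd: "degree (X * pderiv s) \<le> n - 1"
        using Xd[of "pderiv s"] ds degree_pderiv[of s] n2 by simp
      have sn2: "Suc (n - 2) = n - 1" using n2 by simp
      have "coeff (X * pderiv s) (n - 1) = coeff (pderiv s) (n - 2)"
        using Xc[of "pderiv s" "n - 2"] unfolding sn2 .
      also have "\<dots> = of_nat (Suc (n - 2)) * coeff s (Suc (n - 2))"
        by (rule coeff_pderiv)
      also have "\<dots> = (real n - 1) * coeff s (n - 1)"
        unfolding sn2 using n2 by (simp add: of_nat_diff)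
      finally have "coeff (X * pderiv s) (n - 1) = (real n - 1) * lead_coeff (P n)" using cs by simp
      then show ?thesis using L_orth[OF dd] leadne[of n] leadne[of "n-1"] by (simp add: An field_simps)
    qed
    have xw: "X * W * (s * P (n - 1)) = W * P n * P (n - 1)"
      unfolding s by (simp add: algebra_simps)
    have "L (smult c (s * P (n - 1)) + X * pderiv (s * P (n - 1)) - X * W * (s * P (n - 1))) = 
       L (smult c (s * P (n - 1))) + L (X * pderiv (s * P (n - 1))) - L (X * W * (s * P (n - 1)))"
      by (simp only: L_add L_diff)
    also have "\<dots> = c / A n + (real n - 1) / A n - L (W * P n * P (n - 1))"
      unfolding e1 e2 e3 e4 xw by simp
    finally have "L (smult c (s * P (n - 1)) + X * pderiv (s * P (n - 1)) - X * W * (s * P (n - 1))) = 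
       c / A n + (real n - 1) / A n - L (W * P n * P (n - 1))" .
    then have "L (W * P n * P (n - 1)) = c / A n + (real n - 1) / A n" using ib[of "s * P (n - 1)"]
      by simp
    then have "L (W * P n * P (n - 1)) = (c + real n - 1) / A n" using Anpos
      by (simp add: field_simps)
    then show ?thesis using True by (simp add: \<theta>_def W_def algebra_simps)
  qed
qed

lemma freud:
  assumes n: "n \<ge> 1"
  shows "A n ^ 2 * (A (n+1) ^ 2 + A n ^ 2 + A (n-1) ^ 2 + 2 * t) = \<theta> n"
proof -
  have "\<theta> n / A n = A n * (A (n+1)^2 + A n^2 + A (n-1)^2) + 2*t*A n"
    using LW_ibp[OF n] LW[OF n] by simp
  then show ?thesis using Apos[OF n] by (simp add: field_simps power2_eq_square)
qed

end


lemma exp_sub_one_bound: "\<bar>exp a - 1\<bar> \<le> \<bar>a\<bar> * exp \<bar>a::real\<bar>"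
proof (cases "a \<ge> 0")
  case True
  have "1 - a \<le> exp (-a)" using exp_ge_add_one_self[of "-a"] by linarith
  then have "(1 - a) * exp a \<le> exp (-a) * exp a" by (simp add: mult_right_mono)
  then have "(1 - a) * exp a \<le> 1" by (simp add: exp_minus field_simps)
  then have "exp a - 1 \<le> a * exp a" by (simp add: algebra_simps)
  moreover have "exp a \<ge> 1" using True by simp
  ultimately show ?thesis using True by simp
next
  case False
  have "1 + a \<le> exp a" using exp_ge_add_one_self[of a] by linarith
  moreover have "exp a \<le> 1" using False by simp
  moreover have "exp \<bar>a\<bar> \<ge> 1" by simp
  ultimately have "\<bar>exp a - 1\<bar> \<le> \<bar>a\<bar> * 1" using False
    by (simp only: abs_if mult_1_right split: if_split) linarith
  also have "\<dots> \<le> \<bar>a\<bar> * exp \<bar>a\<bar>" by (intro mult_left_mono) auto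
  finally show ?thesis .
qed

lemma integrable_tendsto_zero:
  fixes g :: "real \<Rightarrow> real"
  assumes int: "integrable lborel g" and lim: "(g \<longlongrightarrow> L) at_top"
  shows "L = 0"
proof (rule ccontr)
  assume L: "L \<noteq> 0"
  have "((\<lambda>x. \<bar>g x\<bar>) \<longlongrightarrow> \<bar>L\<bar>) at_top" using tendsto_rabs[OF lim] .
  moreover have "\<bar>L\<bar> / 2 < \<bar>L\<bar>" using L by simp
  ultimately have "eventually (\<lambda>x. \<bar>L\<bar> / 2 < \<bar>g x\<bar>) at_top"
    by (rule order_tendstoD)
  then obtain M where M: "\<And>x. x \<ge> M \<Longrightarrow> \<bar>L\<bar> / 2 < \<bar>g x\<bar>"
    by (auto simp: eventually_at_top_linorder)
  have iabs: "integrable lborel (\<lambda>x. \<bar>g x\<bar>)" using int by simp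
  have bound: "real N * (\<bar>L\<bar> / 2) \<le> (LINT x|lborel. \<bar>g x\<bar>)" for N :: nat
  proof -
    have ii: "integrable lborel (indicat_real {M..M + real N})"
      by (rule integrable_real_indicator) (auto simp: emeasure_lborel_Icc)
    have "(LINT x|lborel. (\<bar>L\<bar> / 2) * indicat_real {M..M + real N} x) \<le> (LINT x|lborel. \<bar>g x\<bar>)"
    proof (rule integral_mono)
      show "integrable lborel (\<lambda>x. (\<bar>L\<bar> / 2) * indicat_real {M..M + real N} x)"
        using ii by simp
      show "integrable lborel (\<lambda>x. \<bar>g x\<bar>)" by (rule iabs)
      fix x show "(\<bar>L\<bar> / 2) * indicat_real {M..M + real N} x \<le> \<bar>g x\<bar>"
        using M[of x] by (cases "x \<in> {M..M + real N}") auto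
    qed
    moreover have "(LINT x|lborel. (\<bar>L\<bar> / 2) * indicat_real {M..M + real N} x) = (\<bar>L\<bar> / 2) * real N"
      by (simp add: measure_lborel_Icc)
    ultimately show ?thesis by (simp add: mult.commute)
  qed
  obtain N :: nat where N: "real N > 2 * (LINT x|lborel. \<bar>g x\<bar>) / \<bar>L\<bar>"
    using reals_Archimedean2 by blast
  have "real N * (\<bar>L\<bar> / 2) > (LINT x|lborel. \<bar>g x\<bar>)"
    using N L by (simp add: field_simps)
  with bound[of N] show False by simp
qed


lemma w_shift: "pIV_weight \<rho> (t + h) u = pIV_weight \<rho> t u * exp (- h * u^2)"
  unfolding pIV_weight_def by (simp add: mult_exp_exp algebra_simps)

lemma w_nonneg: "pIV_weight \<rho> t u \<ge> 0"
  unfolding pIV_weight_def by simp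

lemma moment_deriv:
  assumes int: "\<And>s k. integrable lborel (\<lambda>u. u ^ k * pIV_weight \<rho> s u)"
  shows "((\<lambda>s. LINT u|lborel. u ^ k * pIV_weight \<rho> s u) has_real_derivative
           - (LINT u|lborel. u ^ (k + 2) * pIV_weight \<rho> t u)) (at t)"
proof -
  define w where "w s u = pIV_weight \<rho> s u" for s u
  define \<mu> where "\<mu> s = (LINT u|lborel. u ^ k * w s u)" for s
  define D where "D = - (LINT u|lborel. u ^ (k + 2) * w t u)"
  have intw: "integrable lborel (\<lambda>u. u ^ j * w s u)" for j s unfolding w_def by (rule int)
  have key: "(\<lambda>i. (\<mu> (t + X i) - \<mu> t) / X i) \<longlonglongrightarrow> D"
    if X0: "\<And>i. X i \<noteq> 0" and Xl: "X \<longlonglongrightarrow> 0" for X :: "nat \<Rightarrow> real"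
  proof -
    have "Bseq X" using Xl by (intro convergent_imp_Bseq) (auto simp: convergent_def)
    then obtain B where B: "B > 0" "\<And>i. norm (X i) \<le> B" by (auto elim: BseqE)
    define s where "s i u = u ^ k * w t u * ((exp (- X i * u^2) - 1) / X i)" for i u
    have eq: "(\<mu> (t + X i) - \<mu> t) / X i = (LINT u|lborel. s i u)" for i
    proof -
      have "\<mu> (t + X i) - \<mu> t = (LINT u|lborel. u ^ k * w (t + X i) u - u ^ k * w t u)"
        unfolding \<mu>_def by (rule Bochner_Integration.integral_diff[symmetric]) (auto intro: intw)
      also have "\<dots> = (LINT u|lborel. u ^ k * w t u * (exp (- X i * u^2) - 1))"
        by (rule Bochner_Integration.integral_cong) (auto simp: w_def w_shift algebra_simps)
      finally have "(\<mu> (t + X i) - \<mu> t) / X i = (LINT u|lborel. u ^ k * w t u * (exp (- X i * u^2) - 1)) / X i"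
        by simp
      also have "\<dots> = (LINT u|lborel. u ^ k * w t u * (exp (- X i * u^2) - 1) / X i)"
        by (rule integral_divide_zero[symmetric])
      finally show ?thesis unfolding s_def by simp
    qed
    have ints: "integrable lborel (s i)" for i
    proof -
      have "integrable lborel (\<lambda>u. (u ^ k * w (t + X i) u - u ^ k * w t u) / X i)"
        using intw by auto
      moreover have "(\<lambda>u. (u ^ k * w (t + X i) u - u ^ k * w t u) / X i) = s i"
        by (auto simp: s_def w_def w_shift algebra_simps fun_eq_iff)
      ultimately show ?thesis by simp
    qed
    have lim: "(\<lambda>i. LINT u|lborel. s i u) \<longlonglongrightarrow> (LINT u|lborel. - (u ^ (k + 2) * w t u))"
    proof (rule integral_dominated_convergence[where w = "\<lambda>u. \<bar>u ^ (k + 2) * w (t - B) u\<bar>"])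
      show "(\<lambda>u. - (u ^ (k + 2) * w t u)) \<in> borel_measurable lborel"
        using intw[of "k+2" t] by auto
      show "s i \<in> borel_measurable lborel" for i using ints[of i] by auto
      show "integrable lborel (\<lambda>u. \<bar>u ^ (k + 2) * w (t - B) u\<bar>)"
        using intw[of "k+2" "t - B"] by auto
      show "AE u in lborel. (\<lambda>i. s i u) \<longlonglongrightarrow> - (u ^ (k + 2) * w t u)"
      proof (rule AE_I2)
        fix u :: real
        have "((\<lambda>h. exp (- h * u^2)) has_real_derivative (exp (- 0 * u^2) * (- (u^2)))) (at 0)"
          by (auto intro!: derivative_eq_intros)
        then have "((\<lambda>h. (exp (- (0 + h) * u^2) - exp (- 0 * u^2)) / h) \<longlongrightarrow> (- (u^2))) (at 0)"
          unfolding DERIV_def by simp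
        then have "((\<lambda>h. (exp (- h * u^2) - 1) / h) \<longlongrightarrow> (- (u^2))) (at 0)" by simp
        then have "((\<lambda>h. (exp (- h * u^2) - 1) / h) \<circ> X) \<longlonglongrightarrow> (- (u^2))"
          using X0 Xl unfolding tendsto_at_iff_sequentially by auto
        then have "(\<lambda>i. u ^ k * w t u * ((exp (- X i * u^2) - 1) / X i)) \<longlonglongrightarrow> u ^ k * w t u * (- (u^2))"
          by (intro tendsto_mult tendsto_const) (simp add: o_def)
        then show "(\<lambda>i. s i u) \<longlonglongrightarrow> - (u ^ (k + 2) * w t u)"
          unfolding s_def by (simp add: power_add power2_eq_square algebra_simps)
      qed
      show "AE u in lborel. norm (s i u) \<le> \<bar>u ^ (k + 2) * w (t - B) u\<bar>" for i
      proof (rule AE_I2)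
        fix u :: real
        have wt: "w t u \<ge> 0" unfolding w_def by (rule w_nonneg)
        have wB: "w (t - B) u = w t u * exp (B * u^2)"
          using w_shift[of \<rho> t "- B" u] unfolding w_def by simp
        have "\<bar>exp (- X i * u^2) - 1\<bar> \<le> \<bar>- X i * u^2\<bar> * exp \<bar>- X i * u^2\<bar>"
          by (rule exp_sub_one_bound)
        also have "\<dots> \<le> \<bar>X i\<bar> * u^2 * exp (B * u^2)"
        proof -
          have "\<bar>- X i * u^2\<bar> = \<bar>X i\<bar> * u^2" by (simp add: abs_mult)
          moreover have "\<bar>X i\<bar> * u^2 \<le> B * u^2" using B(2)[of i] by (simp add: mult_right_mono)
          ultimately show ?thesis by (simp add: mult_left_mono)
        qed
        finally have b1: "\<bar>(exp (- X i * u^2) - 1) / X i\<bar> \<le> u^2 * exp (B * u^2)"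
          using X0[of i] by (simp add: divide_le_eq abs_divide mult.commute mult.left_commute)
        have "norm (s i u) = \<bar>u ^ k\<bar> * w t u * \<bar>(exp (- X i * u^2) - 1) / X i\<bar>"
          unfolding s_def using wt by (simp add: abs_mult)
        also have "\<dots> \<le> \<bar>u ^ k\<bar> * w t u * (u^2 * exp (B * u^2))"
          using b1 wt by (intro mult_left_mono) auto
        also have "\<dots> = \<bar>u ^ (k + 2) * w (t - B) u\<bar>"
          using wt by (simp add: wB abs_mult power_add power_abs power2_eq_square algebra_simps)
        finally show "norm (s i u) \<le> \<bar>u ^ (k + 2) * w (t - B) u\<bar>" .
      qed
    qed
    then show ?thesis unfolding eq[symmetric] D_def by simp
  qed
  have "((\<lambda>h. (\<mu> (t + h) - \<mu> t) / h) \<longlongrightarrow> D) (at 0)"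
    unfolding tendsto_at_iff_sequentially o_def using key by auto
  then show ?thesis unfolding DERIV_def \<mu>_def D_def w_def .
qed


lemma abs_powr_sq: "\<bar>u::real\<bar> powr g = (u^2) powr (g / 2)"
proof (cases "u = 0")
  case True then show ?thesis by simp
next
  case False
  have "u^2 = \<bar>u\<bar> powr 2"
    using False by (simp add: powr_realpow[symmetric])
  then have "(u^2) powr (g / 2) = (\<bar>u\<bar> powr 2) powr (g / 2)" by simp
  also have "\<dots> = \<bar>u\<bar> powr (2 * (g / 2))" by (rule powr_powr)
  also have "\<dots> = \<bar>u\<bar> powr g" by simp
  finally show ?thesis by simp
qed

lemma G_deriv:
  fixes u g :: real
  assumes u: "u \<noteq> 0"
  shows "((\<lambda>u. u * \<bar>u\<bar> powr g) has_real_derivative (g + 1) * \<bar>u\<bar> powr g) (at u)"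
proof -
  have pos: "u^2 > 0" using u by simp
  have d1: "((\<lambda>z. z powr (g/2)) has_real_derivative (g/2) * (u^2) powr (g/2 - 1)) (at (u^2))"
    by (rule has_real_derivative_powr[OF pos])
  have d2: "((\<lambda>u. u^2) has_real_derivative 2 * u) (at u)"
    by (auto intro!: derivative_eq_intros)
  have d3: "((\<lambda>u. (u^2) powr (g/2)) has_real_derivative (g/2) * (u^2) powr (g/2 - 1) * (2 * u)) (at u)"
    using DERIV_chain2[OF d1 d2] .
  have e: "(u^2) powr (g/2 - 1) = (u^2) powr (g/2) / u^2"
    using pos by (simp add: powr_diff powr_one)
  have d4: "((\<lambda>u. u * (u^2) powr (g/2)) has_real_derivative (g + 1) * (u^2) powr (g/2)) (at u)"
  proof -
    have "((\<lambda>u. u * (u^2) powr (g/2)) has_real_derivative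
        1 * (u^2) powr (g/2) + ((g/2) * (u^2) powr (g/2 - 1) * (2 * u)) * u) (at u)"
      by (rule DERIV_mult[OF DERIV_ident d3])
    moreover have "1 * (u^2) powr (g/2) + ((g/2) * (u^2) powr (g/2 - 1) * (2 * u)) * u = (g + 1) * (u^2) powr (g/2)"
      unfolding e using pos by (simp add: field_simps power2_eq_square)
    ultimately show ?thesis by simp
  qed
  show ?thesis unfolding abs_powr_sq[of _ g] using d4 .
qed

lemma G_tendsto0:
  fixes g :: real
  assumes g: "g > -1"
  shows "((\<lambda>u. u * \<bar>u\<bar> powr g) \<longlongrightarrow> 0) (at 0)"
proof -
  have eq: "\<bar>u * \<bar>u\<bar> powr g\<bar> = \<bar>u\<bar> powr (g + 1)" for u :: real
  proof (cases "u = 0")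
    case True then show ?thesis by simp
  next
    case False then show ?thesis by (simp add: abs_mult powr_add)
  qed
  have "((\<lambda>u::real. \<bar>u\<bar> powr (g + 1)) \<longlongrightarrow> 0) (at 0)"
    using g by (intro tendsto_zero_powrI) (auto intro!: tendsto_eq_intros)
  then have "((\<lambda>u. \<bar>u * \<bar>u\<bar> powr g\<bar>) \<longlongrightarrow> 0) (at 0)" unfolding eq .
  then show ?thesis by (simp add: tendsto_rabs_zero_iff)
qed

lemma ibp_weight:
  fixes \<rho> t :: real and R :: "real poly"
  assumes rho: "\<rho> > -1"
    and int: "\<And>q. integrable lborel (\<lambda>u. poly q u * pIV_weight \<rho> t u)"
  shows "(LINT u|lborel. poly (smult (2*\<rho>+2) R + [:0,1:] * pderiv R - [:0,1:] * [:0, 2*t, 0, 1:] * R) u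
            * pIV_weight \<rho> t u) = 0"
proof -
  define g where "g = 2 * \<rho> + 1"
  have g: "g > -1" using rho by (simp add: g_def)
  define E where "E u = exp (- (u ^ 4) / 4 - t * u ^ 2)" for u :: real
  define Q where "Q = smult (2*\<rho>+2) R + [:0,1:] * pderiv R - [:0,1:] * [:0, 2*t, 0, 1:] * R"
  define f where "f u = poly Q u * pIV_weight \<rho> t u" for u
  define F where "F u = poly R u * (u * \<bar>u\<bar> powr g) * E u" for u
  have w: "pIV_weight \<rho> t u = \<bar>u\<bar> powr g * E u" for u
    unfolding pIV_weight_def E_def g_def ..
  have intf: "integrable lborel f" unfolding f_def by (rule int)
  have intF: "integrable lborel F"
  proof -
    have "F = (\<lambda>u. poly ([:0,1:] * R) u * pIV_weight \<rho> t u)"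
      by (auto simp: fun_eq_iff F_def w)
    then show ?thesis using int[of "[:0,1:] * R"] by simp
  qed
  have dE: "(E has_real_derivative E u * (- (u^3) - 2 * t * u)) (at u)" for u
    unfolding E_def by (auto intro!: derivative_eq_intros simp: power2_eq_square power3_eq_cube)
  have dF: "(F has_real_derivative f u) (at u)" if u: "u \<noteq> 0" for u
  proof -
    have "(F has_real_derivative
        (poly (pderiv R) u * (u * \<bar>u\<bar> powr g) + ((g + 1) * \<bar>u\<bar> powr g) * poly R u) * E u
        + (E u * (- (u^3) - 2 * t * u)) * (poly R u * (u * \<bar>u\<bar> powr g))) (at u)"
      unfolding F_def by (intro DERIV_mult poly_DERIV G_deriv[OF u] dE)
    moreover have "(poly (pderiv R) u * (u * \<bar>u\<bar> powr g) + ((g + 1) * \<bar>u\<bar> powr g) * poly R u) * E u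
        + (E u * (- (u^3) - 2 * t * u)) * (poly R u * (u * \<bar>u\<bar> powr g)) = f u"
      unfolding f_def Q_def w g_def
      by (simp add: algebra_simps power2_eq_square power3_eq_cube)
    ultimately show ?thesis by simp
  qed
  have contF: "isCont F u" for u
  proof (cases "u = 0")
    case False
    show ?thesis using dF[OF False] by (rule DERIV_isCont)
  next
    case True
    have "((\<lambda>u. poly R u * E u * (u * \<bar>u\<bar> powr g)) \<longlongrightarrow> poly R 0 * E 0 * 0) (at 0)"
    proof (intro tendsto_mult G_tendsto0[OF g])
      show "(E \<longlongrightarrow> E 0) (at 0)" using DERIV_isCont[OF dE[of 0]] by (simp add: isCont_def)
      show "(poly R \<longlongrightarrow> poly R 0) (at 0)" using DERIV_isCont[OF poly_DERIV[of R 0]] by (simp add: isCont_def)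
    qed
    moreover have "F = (\<lambda>u. poly R u * E u * (u * \<bar>u\<bar> powr g))"
      by (auto simp: F_def fun_eq_iff)
    ultimately have "(F \<longlongrightarrow> F 0) (at 0)"
      by (simp add: F_def)
    then show ?thesis using True by (simp add: isCont_def)
  qed
  have Hb: "(LINT x|lborel. indicat_real {-b..b} x *\<^sub>R f x) = F b - F (- b)" if b: "b > 0" for b
  proof -
    have "(f has_integral F b - F (- b)) {-b..b}"
    proof (rule fundamental_theorem_of_calculus_interior_strong[of "{0}"])
      show "finite {0::real}" by simp
      show "- b \<le> b" using b by simp
      show "(F has_vector_derivative f x) (at x)" if "x \<in> {- b<..<b} - {0}" for x
        using dF[of x] that by (simp add: has_real_derivative_iff_has_vector_derivative)
      show "continuous_on {- b..b} F"
        using contF by (intro continuous_at_imp_continuous_on) auto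
    qed
    then have "integral {-b..b} f = F b - F (- b)" by (rule integral_unique)
    moreover have "set_integrable lborel {-b..b} f"
      unfolding set_integrable_def by (rule integrable_mult_indicator) (auto intro: intf)
    ultimately show ?thesis
      using set_borel_integral_eq_integral(2)[of "{-b..b}" f] unfolding set_lebesgue_integral_def by simp
  qed
  have lim1: "((\<lambda>b. LINT x|lborel. indicat_real {-b..b} x *\<^sub>R f x) \<longlongrightarrow> (LINT x|lborel. f x)) at_top"
  proof (rule integral_dominated_convergence_at_top[where w = "\<lambda>x. \<bar>f x\<bar>"])
    show "f \<in> borel_measurable lborel" using intf by auto
    show "(\<lambda>x. indicat_real {-b..b} x *\<^sub>R f x) \<in> borel_measurable lborel" for b
      using intf by auto
    show "integrable lborel (\<lambda>x. \<bar>f x\<bar>)" using intf by auto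
    show "AE x in lborel. ((\<lambda>b. indicat_real {-b..b} x *\<^sub>R f x) \<longlongrightarrow> f x) at_top"
    proof (rule AE_I2, rule tendsto_eventually)
      fix x :: real
      show "\<forall>\<^sub>F b in at_top. indicat_real {-b..b} x *\<^sub>R f x = f x"
        using eventually_ge_at_top[of "\<bar>x\<bar>"] by eventually_elim (auto simp: indicator_def)
    qed
    show "\<forall>\<^sub>F b in at_top. AE x in lborel. norm (indicat_real {-b..b} x *\<^sub>R f x) \<le> \<bar>f x\<bar>"
      by (auto simp: indicator_def)
  qed
  have lim2: "((\<lambda>b. F b - F (- b)) \<longlongrightarrow> (LINT x|lborel. f x)) at_top"
  proof (rule Lim_transform_eventually[OF lim1])
    show "\<forall>\<^sub>F b in at_top. (LINT x|lborel. indicat_real {-b..b} x *\<^sub>R f x) = F b - F (- b)"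
      using eventually_gt_at_top[of "0::real"] by eventually_elim (rule Hb)
  qed
  have intH: "integrable lborel (\<lambda>b. F b - F (- b))"
  proof -
    have "integrable lborel (\<lambda>x. F (0 + (-1) * x))"
      by (rule lborel_integrable_real_affine[OF intF]) simp
    then show ?thesis using intF by simp
  qed
  have "(LINT x|lborel. f x) = 0" by (rule integrable_tendsto_zero[OF intH lim2])
  then show ?thesis unfolding f_def Q_def .
qed


lemma piv_alg:
  fixes x y m z l t a c al be :: real
  assumes x: "x \<noteq> 0"
    and Fm: "m * (x + m + l + 2*t) = c - 2"
    and Fn: "x * (y + x + m + 2*t) = a"
    and Fp: "y * (z + y + x + 2*t) = c"
    and al: "al = a/2 - c + 1" and be: "be = - (a^2) / 2"
  shows "(- (- x * (y - m))) * (y - m) + ((- y * (z - x)) - (- m * (x - l))) * (- x)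
     = (- x * (y - m))^2 / (2 * x) + 3 * x^3 / 2 + 4 * t * x^2 + 2 * (t^2 - al) * x + be / x"
proof -
  have "2 * x * (- ((- x * (y - m)) * (y - m) + ((- y * (z - x)) - (- m * (x - l))) * x))
     = (- x * (y - m))^2 + 3 * x^4 + 8 * t * x^3 + 4 * (t^2 - (a/2 - c + 1)) * x^2 - a^2"
    using Fm Fn Fp by algebra
  moreover have "2 * x * ((- x * (y - m))^2 / (2 * x) + 3 * x^3 / 2 + 4 * t * x^2 + 2 * (t^2 - (a/2 - c + 1)) * x + (- (a^2) / 2) / x)
     = (- x * (y - m))^2 + 3 * x^4 + 8 * t * x^3 + 4 * (t^2 - (a/2 - c + 1)) * x^2 - a^2"
    using x by (simp add: field_simps power2_eq_square power3_eq_cube) (simp add: algebra_simps power4_eq_xxxx)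
  moreover have "(- (- x * (y - m))) * (y - m) + ((- y * (z - x)) - (- m * (x - l))) * (- x)
     = - ((- x * (y - m)) * (y - m) + ((- y * (z - x)) - (- m * (x - l))) * x)" by (simp add: algebra_simps)
  ultimately show ?thesis using x unfolding al be by (metis mult_left_cancel mult_eq_0_iff zero_neq_numeral)
qed

lemma toda_alg:
  fixes x y z v m t a b c :: real
  assumes y: "y \<noteq> 0"
    and Fk: "x * (y + x + m + 2*t) = a"
    and F1: "y * (z + y + x + 2*t) = b"
    and F2: "z * (v + z + y + 2*t) = c"
    and c: "c = a + 2"
  shows "(0 * y - b * (- y * (z - x))) / (y * y) - (- y * (z - x)) - (- x * (y - m)) - 2 = - z * (v - y)"
proof -
  have "(0 * y - b * (- y * (z - x))) / (y * y) = (z + y + x + 2*t) * (z - x)"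
    unfolding F1[symmetric] using y by (simp add: field_simps)
  moreover have "(z + y + x + 2*t) * (z - x) - (- y * (z - x)) - (- x * (y - m)) - 2 = - z * (v - y)"
  proof -
    have e: "((z + y + x + 2*t) * (z - x) - (- y * (z - x)) - (- x * (y - m)) - 2) - (- z * (v - y))
      = (z * (v + z + y + 2*t) - c) - (x * (y + x + m + 2*t) - a) + (c - a - 2)"
      by (simp add: algebra_simps)
    show ?thesis using e Fk F2 c by simp
  qed
  ultimately show ?thesis by simp
qed

lemma d1_alg:
  fixes m0 m2 m4 b1 b2 t c :: real
  assumes m0: "m0 \<noteq> 0" and b1: "b1 = m2 / m0"
    and F: "b1 * (b2 + b1 + 0 + 2*t) = c" and mom: "c * m0 = m4 + 2 * t * m2"
  shows "(- m4 * m0 - m2 * (- m2)) / (m0 * m0) = - b1 * (b2 - 0)"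
proof -
  have "- b1 * (b2 - 0) = b1^2 + 2 * t * b1 - c" using F by (simp add: algebra_simps power2_eq_square)
  moreover have "c = (m4 + 2 * t * m2) / m0" using mom m0 by (simp add: field_simps)
  ultimately show ?thesis using m0 unfolding b1 by (simp add: field_simps power2_eq_square)
qed

context OP begin

lemma b1_L: "L 1 \<noteq> 0" "A 1 ^ 2 = L [:0,0,1:] / L 1"
proof -
  obtain l0 where l0: "P 0 = [:l0:]" "l0 \<noteq> 0"
    using P0 leadne[of 0] by metis
  have "L (P 0 * P 0) = 1" using LPP[of 0 0] by simp
  moreover have "P 0 * P 0 = smult (l0 * l0) 1" using l0 by simp
  moreover have "L (smult (l0 * l0) 1) = l0 * l0 * L 1" by (rule L_smult)
  ultimately have h1: "l0 * l0 * L 1 = 1" by simp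
  have x0: "[:0,1:] * P 0 = smult (A 1) (P 1)" using xrec[of 0] A0 by simp
  have "L (([:0,1:] * P 0) * ([:0,1:] * P 0)) = A 1 ^ 2"
    unfolding x0 using LPP[of 1 1] by (simp add: power2_eq_square)
  moreover have "([:0,1:] * P 0) * ([:0,1:] * P 0) = smult (l0 * l0) [:0,0,1:]"
    using l0 by simp
  moreover have "L (smult (l0 * l0) [:0,0,1:]) = l0 * l0 * L [:0,0,1:]" by (rule L_smult)
  ultimately have h2: "A 1 ^ 2 = l0 * l0 * L [:0,0,1:]" by simp
  show "L 1 \<noteq> 0" using h1 by auto
  have "L 1 = 1 / (l0 * l0)" using h1 l0(2) by (simp add: field_simps)
  then show "A 1 ^ 2 = L [:0,0,1:] / L 1" using h2 by simp
qed

end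


theorem mainTheorem14:
  fixes \<rho> :: real
    and p :: "real \<Rightarrow> nat \<Rightarrow> real poly"
    and a :: "real \<Rightarrow> nat \<Rightarrow> real"
    and n :: nat
  assumes rho: "\<rho> > -1"
    and orth: "\<And>t. orthonormal_polys (pIV_weight \<rho> t) (p t)"
    and a0: "\<And>t. a t 0 = 0"
    and apos: "\<And>t k. k \<ge> 1 \<Longrightarrow> a t k > 0"
    and rec: "\<And>t k u. a t (k + 1) * poly (p t (k + 1)) u
                       = u * poly (p t k) u - a t k * poly (p t (k - 1)) u"
    and n: "n \<ge> 1"
  shows "\<exists>v' v''. \<forall>t.
     ((\<lambda>s. (a s n)\<^sup>2) has_real_derivative v' t) (at t) \<and>
     (v' has_real_derivative v'' t) (at t) \<and>
     (let v = (a t n)\<^sup>2;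
          \<alpha> = - real n / 2 - (2 * \<rho> + 1) * (1 + 3 * (-1) ^ n) / 4;
          \<beta> = - (real n + (2 * \<rho> + 1) * ((1 - (-1) ^ n) / 2))\<^sup>2 / 2
      in v'' t = (v' t)\<^sup>2 / (2 * v) + 3 * v ^ 3 / 2 + 4 * t * v\<^sup>2
                 + 2 * (t\<^sup>2 - \<alpha>) * v + \<beta> / v)"
proof -
  have op: "OP (pIV_weight \<rho> t) (p t) (a t)" for t
  proof (rule OP.intro)
    show "orthonormal_polys (pIV_weight \<rho> t) (p t)" by (rule orth)
    show "a t 0 = 0" by (rule a0)
    show "\<And>k. 1 \<le> k \<Longrightarrow> 0 < a t k" by (rule apos)
    show "\<And>k u. a t (k + 1) * poly (p t (k + 1)) u = u * poly (p t k) u - a t k * poly (p t (k - 1)) u"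
      by (rule rec)
  qed
  have int: "integrable lborel (\<lambda>u. poly q u * pIV_weight \<rho> t u)" for t q
    using OP.int_poly[OF op] .
  have opf: "OPF (pIV_weight \<rho> t) (p t) (a t) (2 * \<rho> + 2) t" for t
  proof (rule OPF.intro[OF op], rule OPF_axioms.intro)
    fix R
    show "OP.L (pIV_weight \<rho> t) (smult (2 * \<rho> + 2) R + [:0, 1:] * pderiv R - [:0, 1:] * [:0, 2 * t, 0, 1:] * R) = 0"
      unfolding OP.L_def[OF op] using ibp_weight[OF rho int] .
  qed
  define th where "th k = real k + (2 * \<rho> + 1) * (if odd k then 1 else 0)" for k :: nat
  define b where "b t k = (a t k)^2" for t k
  have bpos: "b t k > 0" if "k \<ge> 1" for t k using apos[OF that, of t] by (simp add: b_def)
  have b0: "b t 0 = 0" for t by (simp add: b_def a0)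
  have freud: "b t k * (b t (k + 1) + b t k + b t (k - 1) + 2 * t) = th k" for t k
  proof (cases "k \<ge> 1")
    case True
    have "(a t k)^2 * ((a t (k+1))^2 + (a t k)^2 + (a t (k-1))^2 + 2 * t) = OPF.\<theta> (2 * \<rho> + 2) k"
      using OPF.freud[OF opf True] .
    then show ?thesis unfolding b_def th_def OPF.\<theta>_def[OF opf] by simp
  next
    case False
    then have "k = 0" by simp
    then show ?thesis by (simp add: b0 th_def)
  qed
  have th2: "th (k + 2) = th k + 2" for k by (simp add: th_def)
  define \<mu> where "\<mu> k s = (LINT u|lborel. u ^ k * pIV_weight \<rho> s u)" for k s
  have intm: "integrable lborel (\<lambda>u. u ^ k * pIV_weight \<rho> s u)" for k s
    using int[where q="monom 1 k" and t=s] by (simp add: poly_monom)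
  have dmu: "((\<lambda>s. \<mu> k s) has_real_derivative - \<mu> (k + 2) t) (at t)" for k t
    unfolding \<mu>_def using moment_deriv[OF intm] .
  have Lmu: "OP.L (pIV_weight \<rho> t) 1 = \<mu> 0 t" "OP.L (pIV_weight \<rho> t) [:0,0,1:] = \<mu> 2 t" for t
    unfolding OP.L_def[OF op] \<mu>_def by (simp_all add: power2_eq_square mult.assoc)
  have mu0: "\<mu> 0 t \<noteq> 0" for t using OP.b1_L(1)[OF op] Lmu by metis
  have b1: "b t 1 = \<mu> 2 t / \<mu> 0 t" for t
    using OP.b1_L(2)[OF op, of t] Lmu[of t] by (simp add: b_def)
  have mom: "(2 * \<rho> + 2) * \<mu> 0 t = \<mu> 4 t + 2 * t * \<mu> 2 t" for t
  proof -
    have z: "(LINT u|lborel. poly (smult (2*\<rho>+2) 1 + [:0,1:] * pderiv 1 - [:0,1:] * [:0, 2*t, 0, 1:] * 1) u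
            * pIV_weight \<rho> t u) = 0"
      by (rule ibp_weight[OF rho int])
    have "(\<lambda>u. poly (smult (2*\<rho>+2) 1 + [:0,1:] * pderiv 1 - [:0,1:] * [:0, 2*t, 0, 1:] * 1) u
            * pIV_weight \<rho> t u) = (\<lambda>u. (2*\<rho>+2) * (u ^ 0 * pIV_weight \<rho> t u)
            - (u ^ 4 * pIV_weight \<rho> t u + 2 * t * (u ^ 2 * pIV_weight \<rho> t u)))"
      by (auto simp: fun_eq_iff algebra_simps power2_eq_square power4_eq_xxxx)
    with z have "(LINT u|lborel. (2*\<rho>+2) * (u ^ 0 * pIV_weight \<rho> t u)
            - (u ^ 4 * pIV_weight \<rho> t u + 2 * t * (u ^ 2 * pIV_weight \<rho> t u))) = 0" by simp
    moreover have "(LINT u|lborel. (2*\<rho>+2) * (u ^ 0 * pIV_weight \<rho> t u)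
            - (u ^ 4 * pIV_weight \<rho> t u + 2 * t * (u ^ 2 * pIV_weight \<rho> t u)))
         = (LINT u|lborel. (2*\<rho>+2) * (u ^ 0 * pIV_weight \<rho> t u))
            - (LINT u|lborel. u ^ 4 * pIV_weight \<rho> t u + 2 * t * (u ^ 2 * pIV_weight \<rho> t u))"
      by (rule Bochner_Integration.integral_diff) (use intm[of 0 t] intm[of 2 t] intm[of 4 t] in auto)
    moreover have "(LINT u|lborel. u ^ 4 * pIV_weight \<rho> t u + 2 * t * (u ^ 2 * pIV_weight \<rho> t u))
         = (LINT u|lborel. u ^ 4 * pIV_weight \<rho> t u) + (LINT u|lborel. 2 * t * (u ^ 2 * pIV_weight \<rho> t u))"
      by (rule Bochner_Integration.integral_add) (auto intro!: intm)
    ultimately have "(2*\<rho>+2) * \<mu> 0 t - (\<mu> 4 t + 2 * t * \<mu> 2 t) = 0"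
      unfolding \<mu>_def by (simp only: integral_mult_right_zero)
    then show ?thesis by simp
  qed
  define T where "T k t = - b t k * (b t (k + 1) - b t (k - 1))" for k t
  have D01: "((\<lambda>s. b s k) has_real_derivative T k t) (at t) \<and> ((\<lambda>s. b s (k+1)) has_real_derivative T (k+1) t) (at t)" for k t
  proof (induction k arbitrary: t)
    case 0
    have d0: "((\<lambda>s. b s 0) has_real_derivative T 0 t) (at t)" for t
      by (simp add: b0 T_def)
    have d1: "((\<lambda>s. b s 1) has_real_derivative T 1 t) (at t)" for t
    proof -
      have "((\<lambda>s. \<mu> 2 s / \<mu> 0 s) has_real_derivative
          (- \<mu> 4 t * \<mu> 0 t - \<mu> 2 t * (- \<mu> 2 t)) / (\<mu> 0 t * \<mu> 0 t)) (at t)"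
      proof -
        have e4: "(2::nat) + 2 = 4" by simp
        have dm2: "((\<lambda>s. \<mu> 2 s) has_real_derivative - \<mu> 4 t) (at t)" using dmu[of 2 t] unfolding e4 .
        have dm0: "((\<lambda>s. \<mu> 0 s) has_real_derivative - \<mu> 2 t) (at t)" using dmu[of 0 t] unfolding add_0 .
        show ?thesis using DERIV_divide[OF dm2 dm0 mu0[of t]] .
      qed
      moreover have "(- \<mu> 4 t * \<mu> 0 t - \<mu> 2 t * (- \<mu> 2 t)) / (\<mu> 0 t * \<mu> 0 t) = - b t 1 * (b t 2 - 0)"
      proof (rule d1_alg[OF mu0 b1 _ mom])
        show "b t 1 * (b t 2 + b t 1 + 0 + 2 * t) = 2 * \<rho> + 2"
          using freud[of t 1] by (simp add: b0 th_def numeral_2_eq_2)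
      qed
      moreover have "(\<lambda>s. b s 1) = (\<lambda>s. \<mu> 2 s / \<mu> 0 s)" using b1 by auto
      ultimately show ?thesis by (simp add: T_def b0 numeral_2_eq_2)
    qed
    show ?case using d0 d1 by simp
  next
    case (Suc k)
    have dk: "((\<lambda>s. b s k) has_real_derivative T k t) (at t)" using Suc.IH[of t] by simp
    have dk1: "((\<lambda>s. b s (k+1)) has_real_derivative T (k+1) t) (at t)" using Suc.IH[of t] by simp
    have feq: "(\<lambda>s. b s (k+2)) = (\<lambda>s. th (k+1) / b s (k+1) - b s (k+1) - b s k - 2 * s)"
    proof
      fix s
      have "b s (k+1) * (b s (k+2) + b s (k+1) + b s k + 2 * s) = th (k+1)"
        using freud[of s "k+1"] by (simp add: numeral_2_eq_2)
      moreover have "b s (k+1) > 0" using bpos[of "k+1" s] by simp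
      ultimately show "b s (k+2) = th (k+1) / b s (k+1) - b s (k+1) - b s k - 2 * s"
        by (simp add: field_simps)
    qed
    have "((\<lambda>s. th (k+1) / b s (k+1) - b s (k+1) - b s k - 2 * s) has_real_derivative
        (0 * b t (k+1) - th (k+1) * T (k+1) t) / (b t (k+1) * b t (k+1)) - T (k+1) t - T k t - 2 * 1) (at t)"
    proof (intro DERIV_diff DERIV_divide DERIV_const dk dk1 DERIV_cmult DERIV_ident)
      show "b t (k+1) \<noteq> 0" using bpos[of "k+1" t] by simp
    qed
    moreover have "(0 * b t (k+1) - th (k+1) * T (k+1) t) / (b t (k+1) * b t (k+1)) - T (k+1) t - T k t - 2 * 1
        = T (k+2) t"
    proof -
      have "(0 * b t (k+1) - th (k+1) * (- b t (k+1) * (b t (k+2) - b t k))) / (b t (k+1) * b t (k+1))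
            - (- b t (k+1) * (b t (k+2) - b t k)) - (- b t k * (b t (k+1) - b t (k-1))) - 2
          = - b t (k+2) * (b t (k+3) - b t (k+1))"
      proof (rule toda_alg)
        show "b t (k+1) \<noteq> 0" using bpos[of "k+1" t] by simp
        show "b t k * (b t (k+1) + b t k + b t (k-1) + 2 * t) = th k" using freud[of t k] .
        show "b t (k+1) * (b t (k+2) + b t (k+1) + b t k + 2 * t) = th (k+1)"
          using freud[of t "k+1"] by (simp add: numeral_2_eq_2)
        show "b t (k+2) * (b t (k+3) + b t (k+2) + b t (k+1) + 2 * t) = th (k+2)"
          using freud[of t "k+2"] by (simp add: numeral_2_eq_2 numeral_3_eq_3)
        show "th (k+2) = th k + 2" by (rule th2)
      qed
      then show ?thesis by (simp add: T_def numeral_2_eq_2 numeral_3_eq_3)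
    qed
    ultimately have "((\<lambda>s. b s (k+2)) has_real_derivative T (k+2) t) (at t)"
      unfolding feq by simp
    then show ?case using dk1 by (simp add: numeral_2_eq_2)
  qed
  have D: "((\<lambda>s. b s k) has_real_derivative T k t) (at t)" for k t using D01 by blast
  define v' where "v' t = T n t" for t
  define v'' where "v'' t = (- T n t) * (b t (n+1) - b t (n-1)) + (T (n+1) t - T (n-1) t) * (- b t n)" for t
  have ix: "n - 1 + 1 = n" "n - 1 - 1 = n - 2" "n + 1 - 1 = n" "n + 1 + 1 = n + 2" "n - 1 + 2 = n + 1"
    using n by auto
  have main: "((\<lambda>s. (a s n)\<^sup>2) has_real_derivative v' t) (at t) \<and>
     (v' has_real_derivative v'' t) (at t) \<and>
     (let v = (a t n)\<^sup>2;
          \<alpha> = - real n / 2 - (2 * \<rho> + 1) * (1 + 3 * (-1) ^ n) / 4;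
          \<beta> = - (real n + (2 * \<rho> + 1) * ((1 - (-1) ^ n) / 2))\<^sup>2 / 2
      in v'' t = (v' t)\<^sup>2 / (2 * v) + 3 * v ^ 3 / 2 + 4 * t * v\<^sup>2
                 + 2 * (t\<^sup>2 - \<alpha>) * v + \<beta> / v)" for t
  proof (intro conjI)
    show "((\<lambda>s. (a s n)\<^sup>2) has_real_derivative v' t) (at t)"
      using D[of n t] unfolding v'_def b_def .
    have "v' = (\<lambda>s. (- b s n) * (b s (n+1) - b s (n-1)))"
      by (auto simp: v'_def T_def fun_eq_iff)
    then show "(v' has_real_derivative v'' t) (at t)"
      unfolding v''_def by (simp only:) (intro DERIV_mult DERIV_minus DERIV_diff D)
    define al where "al = - real n / 2 - (2 * \<rho> + 1) * (1 + 3 * (-1) ^ n) / 4"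
    define be where "be = - (real n + (2 * \<rho> + 1) * ((1 - (-1) ^ n) / 2))\<^sup>2 / 2"
    have thn: "real n + (2 * \<rho> + 1) * ((1 - (-1) ^ n) / 2) = th n"
      by (cases "even n") (simp_all add: th_def)
    have "v'' t = (v' t)\<^sup>2 / (2 * b t n) + 3 * b t n ^ 3 / 2 + 4 * t * (b t n)\<^sup>2
                 + 2 * (t\<^sup>2 - al) * b t n + be / b t n"
    proof -
      have e1: "T (n+1) t = - b t (n+1) * (b t (n+2) - b t n)" unfolding T_def ix ..
      have e2: "T (n-1) t = - b t (n-1) * (b t n - b t (n-2))" unfolding T_def ix ..
      have "(- (- b t n * (b t (n+1) - b t (n-1)))) * (b t (n+1) - b t (n-1))
          + ((- b t (n+1) * (b t (n+2) - b t n)) - (- b t (n-1) * (b t n - b t (n-2)))) * (- b t n)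
          = (- b t n * (b t (n+1) - b t (n-1)))^2 / (2 * b t n) + 3 * b t n ^ 3 / 2 + 4 * t * (b t n)^2
            + 2 * (t^2 - al) * b t n + be / b t n"
      proof (rule piv_alg)
        show "b t n \<noteq> 0" using bpos[OF n, of t] by simp
        show "b t (n-1) * (b t n + b t (n-1) + b t (n-2) + 2 * t) = th (n+1) - 2"
          using freud[of t "n-1"] th2[of "n-1"] unfolding ix by simp
        show "b t n * (b t (n+1) + b t n + b t (n-1) + 2 * t) = th n" by (rule freud)
        show "b t (n+1) * (b t (n+2) + b t (n+1) + b t n + 2 * t) = th (n+1)"
          using freud[of t "n+1"] unfolding ix .
        show "al = th n / 2 - th (n+1) + 1"
          unfolding al_def th_def by (cases "even n") (simp_all add: field_simps)
        show "be = - ((th n)^2) / 2" unfolding be_def thn ..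
      qed
      then show ?thesis unfolding v''_def v'_def e1 e2 by (simp add: T_def)
    qed
    then show "let v = (a t n)\<^sup>2;
          \<alpha> = - real n / 2 - (2 * \<rho> + 1) * (1 + 3 * (-1) ^ n) / 4;
          \<beta> = - (real n + (2 * \<rho> + 1) * ((1 - (-1) ^ n) / 2))\<^sup>2 / 2
      in v'' t = (v' t)\<^sup>2 / (2 * v) + 3 * v ^ 3 / 2 + 4 * t * v\<^sup>2
                 + 2 * (t\<^sup>2 - \<alpha>) * v + \<beta> / v"
      unfolding Let_def al_def be_def b_def .
  qed
  show ?thesis by (intro exI allI) (rule main)
qed


end
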